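(* Let $n$ be a positive integer and let $D_{2n}=\langle a,x\mid a^n=e,\ x^2=e,\ xax=a^{-1}\rangle$ be the dihedral group of order $2n$. Then: (1) For every positive integer $m$ with $m\mid n$ and $\gcd(m,\tfrac nm)=1$, $D_{2n}\simeq\mathbb{Z}_m\rtimes_\varphi D_{2n/m}$, where, writing $D_{2n/m}=\langle a,x\mid a^{n/m}=e,x^2=e,xax=a^{-1}\rangle$, the homomorphism $\varphi\colon D_{2n/m}\to\mathrm{Aut}(\mathbb{Z}_m)$ is given by $\varphi(a)(1)=1$ and $\varphi(x)(1)=-1$. (2) If $n$ is even, then $D_{2n}\simeq D_n\rtimes_\varphi\mathbb{Z}_2$, where, writing $D_n=\langle a,x\mid a^{n/2}=e,x^2=e,xax=a^{-1}\rangle$, $\varphi(1)$ is the automorphism of $D_n$ with $\varphi(1)(a)=a^{-1}$ and $\varphi(1)(x)=ax$. (3) If $2\mid n$ and $4\nmid n$, then $D_{2n}\simeq D_n\times\mathbb{Z}_2$. (4) If $D_{2n}\simeq X\rtimes Y$ for some groups $X,Y$ with $|X|>1$, $|Y|>1$ and some semidirect product structure, then either (a) $X\simeq\mathbb{Z}_m$ and $Y\simeq D_{2n/m}$ for some $m\mid n$ with $\gcd(m,\tfrac nm)=1$, or (b) $2\mid n$, $X\simeq D_n$ and $Y\simeq\mathbb{Z}_2$.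
   Context: $D_{2k}$ denotes the dihedral group of order $2k$ (so $D_2\simeq\mathbb{Z}_2$, $D_4\simeq\mathbb{Z}_2\times\mathbb{Z}_2$). $\mathbb{Z}_m=\langle 1\rangle$ is the cyclic group of order $m$ written additively. For groups $N,H$ and a homomorphism $\varphi\colon H\to\mathrm{Aut}(N)$, $N\rtimes_\varphi H$ is $N\times H$ with product $(n_1,h_1)(n_2,h_2)=(n_1\varphi(h_1)(n_2),h_1h_2)$; a direct product counts as a semidirect product with trivial $\varphi$. *)

theory Defs
  imports "HOL-Algebra.Algebra"
begin

text \<open>The dihedral group of order 2n (n > 0): the element (i, b) stands for
  a^i x^b with 0 \<le> i < n, using x a^j = a^(-j) x.\<close>
definition dihedral_group :: "nat \<Rightarrow> (int \<times> bool) monoid" where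
  "dihedral_group n =
     \<lparr>carrier = {0..<int n} \<times> UNIV,
      monoid.mult = (\<lambda>(i, b) (j, c). ((if b then i - j else i + j) mod int n, b \<noteq> c)),
      one = (0, False)\<rparr>"

definition dih_a :: "nat \<Rightarrow> int \<times> bool" where
  "dih_a n = (1 mod int n, False)"

definition dih_x :: "nat \<Rightarrow> int \<times> bool" where
  "dih_x n = (0, True)"

definition semidirect_product ::
  "('a, 'c) monoid_scheme \<Rightarrow> ('b, 'd) monoid_scheme \<Rightarrow> ('b \<Rightarrow> 'a \<Rightarrow> 'a) \<Rightarrow> ('a \<times> 'b) monoid" where
  "semidirect_product N H \<phi> =
     \<lparr>carrier = carrier N \<times> carrier H,
      monoid.mult = (\<lambda>(n1, h1) (n2, h2). (n1 \<otimes>\<^bsub>N\<^esub> \<phi> h1 n2, h1 \<otimes>\<^bsub>H\<^esub> h2)),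
      one = (\<one>\<^bsub>N\<^esub>, \<one>\<^bsub>H\<^esub>)\<rparr>"

end

theory Submission
  imports Defs
begin


abbreviation D where "D n \<equiv> dihedral_group n"

lemma D_carrier: "carrier (D n) = {0..<int n} \<times> UNIV"
  by (simp add: dihedral_group_def)

lemma D_mult [simp]: "(i, b) \<otimes>\<^bsub>D n\<^esub> (j, c) = ((if b then i - j else i + j) mod int n, b \<noteq> c)"
  by (simp add: dihedral_group_def)

lemma D_one [simp]: "\<one>\<^bsub>D n\<^esub> = (0, False)"
  by (simp add: dihedral_group_def)

lemma D_mem [simp]: "(i, b) \<in> carrier (D n) \<longleftrightarrow> 0 \<le> i \<and> i < int n"
  by (simp add: dihedral_group_def)

lemma group_D: assumes "n > 0" shows "group (D n)"
proof (rule groupI)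
  fix x y assume "x \<in> carrier (D n)" "y \<in> carrier (D n)"
  then show "x \<otimes>\<^bsub>D n\<^esub> y \<in> carrier (D n)" using assms
    by (cases x; cases y) auto
next
  show "\<one>\<^bsub>D n\<^esub> \<in> carrier (D n)" using assms by simp
next
  fix x y z assume "x \<in> carrier (D n)" "y \<in> carrier (D n)" "z \<in> carrier (D n)"
  then show "x \<otimes>\<^bsub>D n\<^esub> y \<otimes>\<^bsub>D n\<^esub> z = x \<otimes>\<^bsub>D n\<^esub> (y \<otimes>\<^bsub>D n\<^esub> z)"
    by (cases x; cases y; cases z) (auto simp: mod_simps algebra_simps)
next
  fix x assume "x \<in> carrier (D n)"
  then show "\<one>\<^bsub>D n\<^esub> \<otimes>\<^bsub>D n\<^esub> x = x"
    by (cases x) auto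
next
  fix x assume "x \<in> carrier (D n)"
  then obtain i b where x: "x = (i, b)" "0 \<le> i" "i < int n" by (cases x) auto
  show "\<exists>y\<in>carrier (D n). y \<otimes>\<^bsub>D n\<^esub> x = \<one>\<^bsub>D n\<^esub>"
  proof (cases b)
    case True thus ?thesis using x by (intro bexI[of _ "(i, True)"]) auto
  next
    case False thus ?thesis using x assms by (intro bexI[of _ "((- i) mod int n, False)"]) (auto simp: mod_simps)
  qed
qed


lemma D_inv: assumes "n > 0" "(i,b) \<in> carrier (D n)"
  shows "inv\<^bsub>D n\<^esub> (i, b) = (if b then (i, True) else ((- i) mod int n, False))"
proof (rule group.inv_equality[OF group_D[OF assms(1)]])
  show "(if b then (i, True) else ((- i) mod int n, False)) \<otimes>\<^bsub>D n\<^esub> (i, b) = \<one>\<^bsub>D n\<^esub>"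
    using assms by (auto simp: mod_simps)
qed (use assms in auto)

lemma D_pow: "(i, False) [^]\<^bsub>D n\<^esub> (k::nat) = ((int k * i) mod int n, False)"
  by (induction k) (auto simp: mod_simps algebra_simps)

lemma D_finite: "finite (carrier (D n))"
  by (simp add: D_carrier)

lemma D_order: "order (D n) = 2 * n"
  by (simp add: order_def D_carrier card_cartesian_product)

lemma dih_a_pow: "dih_a n [^]\<^bsub>D n\<^esub> (k::nat) = (int k mod int n, False)"
  by (simp add: dih_a_def D_pow mod_simps)

lemma dih_gen:
  assumes "d > 0" "group B" "h1 \<in> hom (D d) B" "h2 \<in> hom (D d) B"
    "h1 (dih_a d) = h2 (dih_a d)" "h1 (dih_x d) = h2 (dih_x d)" "g \<in> carrier (D d)"
  shows "h1 g = h2 g"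
proof -
  obtain i b where g: "g = (i, b)" "0 \<le> i" "i < int d" using assms(7) by (cases g) auto
  have G: "group (D d)" using group_D[OF assms(1)] .
  have am: "dih_a d \<in> carrier (D d)" "dih_x d \<in> carrier (D d)"
    using assms(1) by (auto simp: dih_a_def dih_x_def)
  have ai: "(i, False) = dih_a d [^]\<^bsub>D d\<^esub> nat i" using g by (simp add: dih_a_pow)
  have hi: "h1 (i, False) = h2 (i, False)"
    unfolding ai using hom_nat_pow[OF assms(3) am(1) G assms(2)] hom_nat_pow[OF assms(4) am(1) G assms(2)] assms(5)
    by simp
  show ?thesis
  proof (cases b)
    case False thus ?thesis using g hi by simp
  next
    case True
    have e: "g = (i, False) \<otimes>\<^bsub>D d\<^esub> dih_x d" using g True by (simp add: dih_x_def)
    have ic: "(i, False) \<in> carrier (D d)" using g by simp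
    show ?thesis unfolding e
      using hom_mult[OF assms(3) ic am(2)] hom_mult[OF assms(4) ic am(2)] hi assms(6) by simp
  qed
qed

definition emb :: "nat \<Rightarrow> nat \<Rightarrow> int \<Rightarrow> int \<times> bool \<Rightarrow> int \<times> bool" where
  "emb n m j = (\<lambda>(k, b). ((int m * k + (if b then j else 0)) mod int n, b))"

lemma emb_hom: assumes "n = m * d" "m > 0" "d > 0"
  shows "emb n m j \<in> hom (D d) (D n)"
proof (rule homI)
  have npos: "int n > 0" using assms by simp
  fix x assume "x \<in> carrier (D d)" then show "emb n m j x \<in> carrier (D n)"
    using npos by (cases x) (simp add: emb_def)
next
  fix x y assume "x \<in> carrier (D d)" "y \<in> carrier (D d)"
  have key: "\<And>z. int m * (z mod int d) = (int m * z) mod int n" unfolding assms(1) of_nat_mult by (rule mult_mod_right)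
  show "emb n m j (x \<otimes>\<^bsub>D d\<^esub> y) = emb n m j x \<otimes>\<^bsub>D n\<^esub> emb n m j y"
  proof -
    obtain k b l c where xy: "x = (k, b)" "y = (l, c)" by (cases x; cases y) auto
    have e1: "(int m * ((k - l) mod int d) + z) mod int n = ((int m * k + w) mod int n - (int m * l + w') mod int n) mod int n"
      if "z = w - w'" for z w w'
    proof -
      have "(int m * ((k - l) mod int d) + z) mod int n = (int m * (k - l) + z) mod int n"
        by (simp add: key mod_add_left_eq)
      also have "\<dots> = ((int m * k + w) - (int m * l + w')) mod int n"
      proof -
        have "int m * (k - l) + z = (int m * k + w) - (int m * l + w')"
          using that by (simp add: right_diff_distrib)
        then show ?thesis by simp
      qed
      also have "\<dots> = ((int m * k + w) mod int n - (int m * l + w') mod int n) mod int n"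
        by (simp add: mod_diff_eq)
      finally show ?thesis .
    qed
    have e2: "(int m * ((k + l) mod int d) + z) mod int n = ((int m * k + w) mod int n + (int m * l + w') mod int n) mod int n"
      if "z = w + w'" for z w w'
    proof -
      have "(int m * ((k + l) mod int d) + z) mod int n = (int m * (k + l) + z) mod int n"
        by (simp add: key mod_add_left_eq)
      also have "\<dots> = ((int m * k + w) + (int m * l + w')) mod int n"
      proof -
        have "int m * (k + l) + z = (int m * k + w) + (int m * l + w')"
          using that by (simp add: distrib_left)
        then show ?thesis by simp
      qed
      also have "\<dots> = ((int m * k + w) mod int n + (int m * l + w') mod int n) mod int n"
        by (simp add: mod_add_eq)
      finally show ?thesis .
    qed
    show ?thesis
    proof (cases b; cases c)
      assume "b" "c" then show ?thesis unfolding xy emb_def using e1[of 0 j j] by simp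
    next
      assume "b" "\<not> c" then show ?thesis unfolding xy emb_def using e1[of j j 0] by simp
    next
      assume "\<not> b" "c" then show ?thesis unfolding xy emb_def using e2[of j 0 j] by simp
    next
      assume "\<not> b" "\<not> c" then show ?thesis unfolding xy emb_def using e2[of 0 0 0] by simp
    qed
  qed
qed

lemma emb_inj: assumes "n = m * d" "m > 0" "d > 0"
  shows "inj_on (emb n m j) (carrier (D d))"
proof (rule inj_onI)
  fix x y assume xy: "x \<in> carrier (D d)" "y \<in> carrier (D d)" "emb n m j x = emb n m j y"
  obtain k b l c where x: "x = (k,b)" "y = (l,c)" by (cases x; cases y) auto
  have bc: "b = c" using xy x by (auto simp: emb_def)
  have "(int m * k + (if b then j else 0)) mod int n = (int m * l + (if b then j else 0)) mod int n"
    using xy x bc by (auto simp: emb_def)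
  then have "int n dvd (int m * k + (if b then j else 0)) - (int m * l + (if b then j else 0))"
    by (simp add: mod_eq_dvd_iff)
  then have "int m * int d dvd int m * (k - l)" using assms by (simp add: algebra_simps)
  then have "int d dvd (k - l)" using assms by simp
  moreover have "0 \<le> k" "k < int d" "0 \<le> l" "l < int d" using xy x by auto
  ultimately have "k = l"
    using dvd_imp_le_int[of "k - l" "int d"] by (cases "k = l") auto
  then show "x = y" using x bc by simp
qed



lemma crt_inj:
  fixes i i' :: int
  assumes "coprime m d" "n = m * d" "0 \<le> i" "i < int n" "0 \<le> i'" "i' < int n"
    "i mod int m = i' mod int m" "i mod int d = i' mod int d"
  shows "i = i'"
proof -
  have "int m dvd i - i'" "int d dvd i - i'" using assms(7,8) by (simp_all add: mod_eq_dvd_iff)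
  moreover have "coprime (int m) (int d)" using assms(1) by simp
  ultimately have "int m * int d dvd i - i'" by (rule divides_mult[rotated -1, rotated])
  then have "int n dvd i - i'" using assms(2) by simp
  then show ?thesis using assms(3-6) dvd_imp_le_int[of "i - i'" "int n"] by (cases "i = i'") auto
qed

lemma inj_card_bij:
  assumes "finite B" "inj_on f A" "f ` A \<subseteq> B" "card A = card B"
  shows "bij_betw f A B"
proof -
  have "card (f ` A) = card B" using card_image[OF assms(2)] assms(4) by simp
  then have "f ` A = B" using card_subset_eq[OF assms(1) assms(3)] by simp
  then show ?thesis using assms(2) by (simp add: bij_betw_def)
qed

lemma part3:
  assumes "n > 0" "2 dvd n" "\<not> 4 dvd n"
  shows "dihedral_group n \<cong> DirProd (dihedral_group (n div 2)) (integer_mod_group 2)"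
proof -
  define k where "k = n div 2"
  have n: "n = 2 * k" using assms(2) k_def by simp
  have kodd: "odd k" using assms(3) n by auto
  have kpos: "k > 0" using assms(1) n by simp
  have cop: "coprime 2 k" using kodd by simp
  define F where "F = (\<lambda>(i::int, b::bool). ((i mod int k, b), i mod 2))"
  have m1: "x mod int n mod int k = x mod int k" for x
    by (rule mod_mod_cancel) (simp add: n)
  have m2: "x mod int n mod 2 = x mod 2" for x
    by (rule mod_mod_cancel) (simp add: n)
  have hom: "F \<in> hom (D n) (D k \<times>\<times> integer_mod_group 2)"
  proof (rule homI)
    fix x assume "x \<in> carrier (D n)" then show "F x \<in> carrier (D k \<times>\<times> integer_mod_group 2)"
      using kpos by (cases x) (auto simp: F_def carrier_integer_mod_group)
  next
    fix x y assume "x \<in> carrier (D n)" "y \<in> carrier (D n)"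
    obtain i b j c where xy: "x = (i, b)" "y = (j, c)" by (cases x; cases y) auto
    have p: "(i - j) mod 2 = (i mod 2 + j mod 2) mod 2" by presburger
    show "F (x \<otimes>\<^bsub>D n\<^esub> y) = F x \<otimes>\<^bsub>D k \<times>\<times> integer_mod_group 2\<^esub> F y"
      unfolding xy F_def using p by (auto simp: m1 m2 mod_simps)
  qed
  have inj: "inj_on F (carrier (D n))"
  proof (rule inj_onI)
    fix x y assume xy: "x \<in> carrier (D n)" "y \<in> carrier (D n)" "F x = F y"
    obtain i b j c where e: "x = (i, b)" "y = (j, c)" by (cases x; cases y) auto
    have "i = j"
      by (rule crt_inj[OF cop n]) (use xy e in \<open>auto simp: F_def\<close>)
    then show "x = y" using xy e by (auto simp: F_def)
  qed
  have "bij_betw F (carrier (D n)) (carrier (D k \<times>\<times> integer_mod_group 2))"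
  proof (rule inj_card_bij[OF _ inj])
    show "finite (carrier (D k \<times>\<times> integer_mod_group 2))"
      by (simp add: D_finite carrier_integer_mod_group)
    show "F ` carrier (D n) \<subseteq> carrier (D k \<times>\<times> integer_mod_group 2)"
      using hom_carrier[OF hom] .
    show "card (carrier (D n)) = card (carrier (D k \<times>\<times> integer_mod_group 2))"
      using D_order[of n] D_order[of k] n by (simp add: order_def card_cartesian_product carrier_integer_mod_group)
  qed
  then show ?thesis unfolding k_def[symmetric] using hom by (auto intro!: is_isoI isoI)
qed

lemma semi_carrier [simp]: "carrier (semidirect_product N H f) = carrier N \<times> carrier H"
  by (simp add: semidirect_product_def)

lemma semi_mult [simp]: "(n1, h1) \<otimes>\<^bsub>semidirect_product N H f\<^esub> (n2, h2) = (n1 \<otimes>\<^bsub>N\<^esub> f h1 n2, h1 \<otimes>\<^bsub>H\<^esub> h2)"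
  by (simp add: semidirect_product_def)

lemma semi_one [simp]: "\<one>\<^bsub>semidirect_product N H f\<^esub> = (\<one>\<^bsub>N\<^esub>, \<one>\<^bsub>H\<^esub>)"
  by (simp add: semidirect_product_def)

lemma Aut_carrier [simp]: "carrier (AutoGroup G) = auto G"
  by (simp add: AutoGroup_def)

lemma Aut_one [simp]: "\<one>\<^bsub>AutoGroup G\<^esub> = (\<lambda>x\<in>carrier G. x)"
  by (simp add: AutoGroup_def BijGroup_def)

lemma Aut_mult: "x \<in> auto G \<Longrightarrow> y \<in> auto G \<Longrightarrow> x \<otimes>\<^bsub>AutoGroup G\<^esub> y = compose (carrier G) x y"
  by (simp add: AutoGroup_def BijGroup_def auto_def)

lemma auto_ext_eq: "f \<in> auto G \<Longrightarrow> g \<in> auto G \<Longrightarrow> (\<And>x. x \<in> carrier G \<Longrightarrow> f x = g x) \<Longrightarrow> f = g"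
  by (rule extensionalityI[of _ "carrier G"]) (auto simp: auto_def Bij_def)

lemma Z_carrier: "m > 0 \<Longrightarrow> carrier (integer_mod_group m) = {0..<int m}"
  by (simp add: carrier_integer_mod_group)

lemma zhom_det:
  assumes "m > 0" "h \<in> hom (integer_mod_group m) (integer_mod_group m)" "k \<in> carrier (integer_mod_group m)"
  shows "h k = (k * h (1 mod int m)) mod int m"
proof -
  have c1: "1 mod int m \<in> carrier (integer_mod_group m)" using assms(1) by (simp add: Z_carrier)
  have k: "k = (1 mod int m) [^]\<^bsub>integer_mod_group m\<^esub> (nat k)"
    using assms(1,3) by (simp add: Z_carrier mod_simps)
  have "h k = (h (1 mod int m)) [^]\<^bsub>integer_mod_group m\<^esub> (nat k)"
    by (subst k, rule hom_nat_pow[OF assms(2) c1]) simp_all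
  then show ?thesis using assms(1,3) by (simp add: Z_carrier)
qed

lemma neg_auto: assumes "m > 0"
  shows "(\<lambda>k\<in>carrier (integer_mod_group m). (- k) mod int m) \<in> auto (integer_mod_group m)"
proof -
  let ?Z = "integer_mod_group m"
  let ?f = "(\<lambda>k\<in>carrier ?Z. (- k) mod int m)"
  have hom: "?f \<in> hom ?Z ?Z"
  proof (rule homI)
    fix x assume "x \<in> carrier ?Z" then show "?f x \<in> carrier ?Z" using assms by (simp add: Z_carrier)
  next
    fix x y assume xy: "x \<in> carrier ?Z" "y \<in> carrier ?Z"
    have "(- ((x + y) mod int m)) mod int m = (- x + - y) mod int m"
      by (simp add: mod_minus_eq)
    also have "\<dots> = ((- x) mod int m + (- y) mod int m) mod int m"
      by (simp add: mod_add_eq)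
    finally show "?f (x \<otimes>\<^bsub>?Z\<^esub> y) = ?f x \<otimes>\<^bsub>?Z\<^esub> ?f y"
      using xy group.subgroupE(4)[OF group_integer_mod_group group.subgroup_self[OF group_integer_mod_group]]
      by (simp add: Z_carrier assms)
  qed
  have inv: "?f (?f k) = k" if "k \<in> carrier ?Z" for k
    using that assms by (auto simp: Z_carrier mod_simps)
  have "bij_betw ?f (carrier ?Z) (carrier ?Z)"
    by (rule bij_betw_byWitness[of _ ?f]) (use inv hom_carrier[OF hom] in auto)
  then show ?thesis using hom by (simp add: auto_def Bij_def)
qed

definition phi0 :: "nat \<Rightarrow> int \<times> bool \<Rightarrow> int \<Rightarrow> int" where
  "phi0 m g = (\<lambda>k\<in>carrier (integer_mod_group m). if snd g then (- k) mod int m else k)"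

lemma phi0_auto: "m > 0 \<Longrightarrow> phi0 m g \<in> auto (integer_mod_group m)"
  using neg_auto[of m] group.id_in_auto[OF group_integer_mod_group, of m]
  by (cases "snd g") (simp_all add: phi0_def)

lemma phi0_hom: assumes "m > 0" "d > 0"
  shows "phi0 m \<in> hom (D d) (AutoGroup (integer_mod_group m))"
proof (rule homI)
  fix x assume "x \<in> carrier (D d)" then show "phi0 m x \<in> carrier (AutoGroup (integer_mod_group m))"
    using phi0_auto[OF assms(1)] by simp
next
  fix x y assume "x \<in> carrier (D d)" "y \<in> carrier (D d)"
  obtain i b j c where xy: "x = (i, b)" "y = (j, c)" by (cases x; cases y) auto
  show "phi0 m (x \<otimes>\<^bsub>D d\<^esub> y) = phi0 m x \<otimes>\<^bsub>AutoGroup (integer_mod_group m)\<^esub> phi0 m y"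
    unfolding Aut_mult[OF phi0_auto[OF assms(1)] phi0_auto[OF assms(1)]]
    by (rule ext) (use assms in \<open>auto simp: xy phi0_def compose_def Z_carrier mod_simps\<close>)
qed

lemma auto_hom: "f \<in> auto G \<Longrightarrow> f \<in> hom G G"
  by (simp add: auto_def)

lemma part1:
  assumes "n > 0" "m > 0" "m dvd n" "coprime m (n div m)"
  shows "(\<exists>\<phi>. \<phi> \<in> hom (dihedral_group (n div m)) (AutoGroup (integer_mod_group m)) \<and>
              \<phi> (dih_a (n div m)) (1 mod int m) = 1 mod int m \<and>
              \<phi> (dih_x (n div m)) (1 mod int m) = (-1) mod int m) \<and>
        (\<forall>\<phi>. \<phi> \<in> hom (dihedral_group (n div m)) (AutoGroup (integer_mod_group m)) \<and>
              \<phi> (dih_a (n div m)) (1 mod int m) = 1 mod int m \<and>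
              \<phi> (dih_x (n div m)) (1 mod int m) = (-1) mod int m \<longrightarrow>
              dihedral_group n \<cong> semidirect_product (integer_mod_group m) (dihedral_group (n div m)) \<phi>)"
proof -
  define d where "d = n div m"
  have n: "n = m * d" using assms(3) d_def by simp
  have dpos: "d > 0" using assms(1) n by (cases d) auto
  have cop: "coprime m d" using assms(4) d_def by simp
  let ?Z = "integer_mod_group m"
  have c1: "1 mod int m \<in> carrier ?Z" using assms(2) by (simp add: Z_carrier)
  have p0a: "phi0 m (dih_a d) (1 mod int m) = 1 mod int m"
    using c1 by (simp add: phi0_def dih_a_def)
  have p0x: "phi0 m (dih_x d) (1 mod int m) = (-1) mod int m"
    using c1 by (simp add: phi0_def dih_x_def mod_minus_eq)
  have ex: "\<exists>\<phi>. \<phi> \<in> hom (D d) (AutoGroup ?Z) \<and>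
              \<phi> (dih_a d) (1 mod int m) = 1 mod int m \<and> \<phi> (dih_x d) (1 mod int m) = (-1) mod int m"
    using phi0_hom[OF assms(2) dpos] p0a p0x by blast
  have all: "D n \<cong> semidirect_product ?Z (D d) \<phi>"
    if phi: "\<phi> \<in> hom (D d) (AutoGroup ?Z)" "\<phi> (dih_a d) (1 mod int m) = 1 mod int m"
      "\<phi> (dih_x d) (1 mod int m) = (-1) mod int m" for \<phi>
  proof -
    have GA: "group (AutoGroup ?Z)" by (rule group.AutoGroup[OF group_integer_mod_group])
    have ac: "dih_a d \<in> carrier (D d)" "dih_x d \<in> carrier (D d)"
      using dpos by (auto simp: dih_a_def dih_x_def)
    have eqg: "\<phi> g = phi0 m g" if "g \<in> carrier (D d)" for g
    proof (rule dih_gen[OF dpos GA phi(1) phi0_hom[OF assms(2) dpos] _ _ that])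
      show "\<phi> (dih_a d) = phi0 m (dih_a d)"
      proof (rule auto_ext_eq)
        show pa: "\<phi> (dih_a d) \<in> auto ?Z" using hom_in_carrier[OF phi(1) ac(1)] by simp
        show "phi0 m (dih_a d) \<in> auto ?Z" by (rule phi0_auto[OF assms(2)])
        fix k assume k: "k \<in> carrier ?Z"
        show "\<phi> (dih_a d) k = phi0 m (dih_a d) k"
          using zhom_det[OF assms(2) auto_hom[OF pa] k] phi(2) p0a zhom_det[OF assms(2) auto_hom[OF phi0_auto[OF assms(2)]] k]
          by simp
      qed
      show "\<phi> (dih_x d) = phi0 m (dih_x d)"
      proof (rule auto_ext_eq)
        show pa: "\<phi> (dih_x d) \<in> auto ?Z" using hom_in_carrier[OF phi(1) ac(2)] by simp
        show "phi0 m (dih_x d) \<in> auto ?Z" by (rule phi0_auto[OF assms(2)])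
        fix k assume k: "k \<in> carrier ?Z"
        show "\<phi> (dih_x d) k = phi0 m (dih_x d) k"
          using zhom_det[OF assms(2) auto_hom[OF pa] k] phi(3) p0x zhom_det[OF assms(2) auto_hom[OF phi0_auto[OF assms(2)]] k]
          by simp
      qed
    qed
    define F where "F = (\<lambda>(i::int, b::bool). (i mod int m, (i mod int d, b)))"
    have m1: "x mod int n mod int m = x mod int m" for x
      by (rule mod_mod_cancel) (simp add: n)
    have m2: "x mod int n mod int d = x mod int d" for x
      by (rule mod_mod_cancel) (simp add: n)
    have hom: "F \<in> hom (D n) (semidirect_product ?Z (D d) \<phi>)"
    proof (rule homI)
      fix x assume "x \<in> carrier (D n)" then show "F x \<in> carrier (semidirect_product ?Z (D d) \<phi>)"
        using dpos assms(2) by (cases x) (auto simp: F_def Z_carrier)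
    next
      fix x y assume xy0: "x \<in> carrier (D n)" "y \<in> carrier (D n)"
      obtain i b j c where xy: "x = (i, b)" "y = (j, c)" by (cases x; cases y) auto
      have gi: "(i mod int d, b) \<in> carrier (D d)" using dpos by simp
      have jm: "j mod int m \<in> carrier ?Z" using assms(2) by (simp add: Z_carrier)
      have ph: "\<phi> (i mod int d, b) (j mod int m) = (if b then (- (j mod int m)) mod int m else j mod int m)"
        using eqg[OF gi] jm by (simp add: phi0_def)
      show "F (x \<otimes>\<^bsub>D n\<^esub> y) = F x \<otimes>\<^bsub>semidirect_product ?Z (D d) \<phi>\<^esub> F y"
        unfolding xy F_def using ph by (auto simp: m1 m2 mod_simps)
    qed
    have inj: "inj_on F (carrier (D n))"
    proof (rule inj_onI)
      fix x y assume xy: "x \<in> carrier (D n)" "y \<in> carrier (D n)" "F x = F y"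
      obtain i b j c where e: "x = (i, b)" "y = (j, c)" by (cases x; cases y) auto
      have "i = j"
        by (rule crt_inj[OF cop n]) (use xy e in \<open>auto simp: F_def\<close>)
      then show "x = y" using xy e by (auto simp: F_def)
    qed
    have "bij_betw F (carrier (D n)) (carrier (semidirect_product ?Z (D d) \<phi>))"
    proof (rule inj_card_bij[OF _ inj])
      show "finite (carrier (semidirect_product ?Z (D d) \<phi>))"
        using assms(2) by (simp add: D_finite Z_carrier)
      show "F ` carrier (D n) \<subseteq> carrier (semidirect_product ?Z (D d) \<phi>)"
        using hom_carrier[OF hom] .
      show "card (carrier (D n)) = card (carrier (semidirect_product ?Z (D d) \<phi>))"
        using D_order[of n] D_order[of d] n assms(2) by (simp add: order_def card_cartesian_product Z_carrier)
    qed
    then show ?thesis using hom by (auto intro!: is_isoI isoI)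
  qed
  show ?thesis unfolding d_def[symmetric] using ex all by blast
qed



lemma iso_sym_closed:
  assumes "h \<in> iso A B" "\<And>x y. x \<in> carrier A \<Longrightarrow> y \<in> carrier A \<Longrightarrow> x \<otimes>\<^bsub>A\<^esub> y \<in> carrier A"
  shows "B \<cong> A"
proof -
  have h: "h \<in> hom A B" "bij_betw h (carrier A) (carrier B)"
    using assms by (auto simp add: iso_def)
  then have HG: "bij_betw (inv_into (carrier A) h) (carrier B) (carrier A)"
    by (simp add: bij_betw_inv_into)
  have "inv_into (carrier A) h \<in> hom B A"
    unfolding hom_def
  proof safe
    show *: "\<And>x. x \<in> carrier B \<Longrightarrow> inv_into (carrier A) h x \<in> carrier A"
      by (meson HG bij_betwE)
    show "inv_into (carrier A) h (x \<otimes>\<^bsub>B\<^esub> y) = inv_into (carrier A) h x \<otimes>\<^bsub>A\<^esub> inv_into (carrier A) h y"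
      if "x \<in> carrier B" "y \<in> carrier B" for x y
    proof (rule inv_into_f_eq)
      show "inj_on h (carrier A)"
        using bij_betw_def h(2) by blast
      show "inv_into (carrier A) h x \<otimes>\<^bsub>A\<^esub> inv_into (carrier A) h y \<in> carrier A"
        by (simp add: * that assms(2))
      show "h (inv_into (carrier A) h x \<otimes>\<^bsub>A\<^esub> inv_into (carrier A) h y) = x \<otimes>\<^bsub>B\<^esub> y"
        using h bij_betw_inv_into_right [of h] unfolding hom_def by (simp add: "*" that)
    qed
  qed
  then show ?thesis
    by (meson HG is_isoI isoI)
qed

definition tau :: "nat \<Rightarrow> int \<times> bool \<Rightarrow> int \<times> bool" where
  "tau k = (\<lambda>g\<in>carrier (D k). ((if snd g then 1 - fst g else - fst g) mod int k, snd g))"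

lemma tau_auto: assumes "k > 0" shows "tau k \<in> auto (D k)"
proof -
  have hom: "tau k \<in> hom (D k) (D k)"
  proof (rule homI)
    fix x assume "x \<in> carrier (D k)" then show "tau k x \<in> carrier (D k)"
      using assms by (cases x) (simp add: tau_def)
  next
    fix x y assume xy0: "x \<in> carrier (D k)" "y \<in> carrier (D k)"
    obtain i b j c where xy: "x = (i, b)" "y = (j, c)" by (cases x; cases y) auto
    have cl: "x \<otimes>\<^bsub>D k\<^esub> y \<in> carrier (D k)" using xy0 group.subgroupE(4)[OF group_D[OF assms] group.subgroup_self[OF group_D[OF assms]]] by simp
    show "tau k (x \<otimes>\<^bsub>D k\<^esub> y) = tau k x \<otimes>\<^bsub>D k\<^esub> tau k y"
    proof (cases b; cases c)
      assume "b" "c"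
      have "(- ((i - j) mod int k)) mod int k = ((1 - i) mod int k - (1 - j) mod int k) mod int k"
      proof -
        have "(- ((i - j) mod int k)) mod int k = (- (i - j)) mod int k" by (simp add: mod_minus_eq)
        also have "\<dots> = ((1 - i) - (1 - j)) mod int k" by (simp add: algebra_simps)
        also have "\<dots> = ((1 - i) mod int k - (1 - j) mod int k) mod int k" by (simp add: mod_diff_eq)
        finally show ?thesis .
      qed
      then show ?thesis using xy0 cl \<open>b\<close> \<open>c\<close> by (simp add: xy tau_def)
    next
      assume "b" "\<not> c"
      have "(1 - (i - j) mod int k) mod int k = ((1 - i) mod int k - (- j) mod int k) mod int k"
      proof -
        have "(1 - (i - j) mod int k) mod int k = (1 - (i - j)) mod int k" by (simp add: mod_diff_right_eq)
        also have "\<dots> = ((1 - i) - (- j)) mod int k" by (simp add: algebra_simps)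
        also have "\<dots> = ((1 - i) mod int k - (- j) mod int k) mod int k" by (simp add: mod_diff_eq)
        finally show ?thesis .
      qed
      then show ?thesis using xy0 cl \<open>b\<close> \<open>\<not> c\<close> by (simp add: xy tau_def)
    next
      assume "\<not> b" "c"
      have "(1 - (i + j) mod int k) mod int k = ((- i) mod int k + (1 - j) mod int k) mod int k"
      proof -
        have "(1 - (i + j) mod int k) mod int k = (1 - (i + j)) mod int k" by (simp add: mod_diff_right_eq)
        also have "\<dots> = ((- i) + (1 - j)) mod int k" by (simp add: algebra_simps)
        also have "\<dots> = ((- i) mod int k + (1 - j) mod int k) mod int k" by (simp add: mod_add_eq)
        finally show ?thesis .
      qed
      then show ?thesis using xy0 cl \<open>\<not> b\<close> \<open>c\<close> by (simp add: xy tau_def)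
    next
      assume "\<not> b" "\<not> c"
      have "(- ((i + j) mod int k)) mod int k = ((- i) mod int k + (- j) mod int k) mod int k"
      proof -
        have "(- ((i + j) mod int k)) mod int k = (- (i + j)) mod int k" by (simp add: mod_minus_eq)
        also have "\<dots> = ((- i) + (- j)) mod int k" by (simp add: algebra_simps)
        also have "\<dots> = ((- i) mod int k + (- j) mod int k) mod int k" by (simp add: mod_add_eq)
        finally show ?thesis .
      qed
      then show ?thesis using xy0 cl \<open>\<not> b\<close> \<open>\<not> c\<close> by (simp add: xy tau_def)
    qed
  qed
  have inv: "tau k (tau k x) = x" if "x \<in> carrier (D k)" for x
  proof -
    obtain i b where x: "x = (i, b)" by (cases x)
    have r: "0 \<le> i" "i < int k" using that x by auto
    have "(1 - (1 - i) mod int k) mod int k = i"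
    proof -
      have "(1 - (1 - i) mod int k) mod int k = (1 - (1 - i)) mod int k" by (simp add: mod_diff_right_eq)
      then show ?thesis using r by simp
    qed
    moreover have "(- ((- i) mod int k)) mod int k = i"
      using r by (simp add: mod_minus_eq)
    ultimately show ?thesis using that assms by (cases b) (auto simp: x tau_def)
  qed
  have "bij_betw (tau k) (carrier (D k)) (carrier (D k))"
    by (rule bij_betw_byWitness[of _ "tau k"]) (use inv hom_carrier[OF hom] in auto)
  moreover have "tau k \<in> extensional (carrier (D k))" by (simp add: tau_def)
  ultimately show ?thesis using hom by (simp add: auto_def Bij_def)
qed

lemma tau_closed: "k > 0 \<Longrightarrow> x \<in> carrier (D k) \<Longrightarrow> tau k x \<in> carrier (D k)"
  using hom_in_carrier[OF auto_hom[OF tau_auto]] by blast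

lemma tau_tau: assumes "k > 0" "x \<in> carrier (D k)" shows "tau k (tau k x) = x"
proof -
  obtain i b where x: "x = (i, b)" by (cases x)
  have r: "0 \<le> i" "i < int k" using assms x by auto
  have "(1 - (1 - i) mod int k) mod int k = i"
  proof -
    have "(1 - (1 - i) mod int k) mod int k = (1 - (1 - i)) mod int k" by (simp add: mod_diff_right_eq)
    then show ?thesis using r by simp
  qed
  moreover have "(- ((- i) mod int k)) mod int k = i"
    using r by (simp add: mod_minus_eq)
  ultimately show ?thesis using assms by (cases b) (auto simp: x tau_def)
qed

definition psi0 :: "nat \<Rightarrow> int \<Rightarrow> int \<times> bool \<Rightarrow> int \<times> bool" where
  "psi0 k e = (if e = 1 then tau k else (\<lambda>x\<in>carrier (D k). x))"

lemma psi0_auto: "k > 0 \<Longrightarrow> psi0 k e \<in> auto (D k)"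
  using tau_auto[of k] group.id_in_auto[OF group_D, of k] by (simp add: psi0_def)

lemma psi0_hom: assumes "k > 0" shows "psi0 k \<in> hom (integer_mod_group 2) (AutoGroup (D k))"
proof (rule homI)
  fix x assume "x \<in> carrier (integer_mod_group 2)"
  then show "psi0 k x \<in> carrier (AutoGroup (D k))" using psi0_auto[OF assms] by simp
next
  fix x y assume xy: "x \<in> carrier (integer_mod_group 2)" "y \<in> carrier (integer_mod_group 2)"
  then have x01: "x = 0 \<or> x = 1" "y = 0 \<or> y = 1" by (auto simp: Z_carrier)
  have te: "z \<notin> carrier (D k) \<Longrightarrow> tau k z = undefined" for z unfolding tau_def by simp
  show "psi0 k (x \<otimes>\<^bsub>integer_mod_group 2\<^esub> y) = psi0 k x \<otimes>\<^bsub>AutoGroup (D k)\<^esub> psi0 k y"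
    unfolding Aut_mult[OF psi0_auto[OF assms] psi0_auto[OF assms]]
  proof (rule ext)
    fix z show "psi0 k ((x \<otimes>\<^bsub>integer_mod_group 2\<^esub> y)) z = compose (carrier (D k)) (psi0 k x) (psi0 k y) z"
      using x01 te[of z] tau_tau[OF assms, of z] tau_closed[OF assms, of z]
      by (cases "z \<in> carrier (D k)") (auto simp: psi0_def compose_def)
  qed
qed

lemma semi_closed:
  assumes "group N" "group H" "\<phi> \<in> hom H (AutoGroup N)"
    "x \<in> carrier (semidirect_product N H \<phi>)" "y \<in> carrier (semidirect_product N H \<phi>)"
  shows "x \<otimes>\<^bsub>semidirect_product N H \<phi>\<^esub> y \<in> carrier (semidirect_product N H \<phi>)"
proof -
  obtain a b c d where xy: "x = (a, b)" "y = (c, d)" by (cases x; cases y) auto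
  have "\<phi> b \<in> auto N" using hom_in_carrier[OF assms(3)] assms(4) xy by simp
  then have "\<phi> b c \<in> carrier N" using hom_in_carrier[OF auto_hom] assms(5) xy by auto
  then show ?thesis using assms xy by (simp add: group.subgroupE(4)[OF _ group.subgroup_self])
qed

lemma part2:
  assumes "n > 0" "even n"
  shows "(\<exists>\<psi>. \<psi> \<in> hom (integer_mod_group 2) (AutoGroup (dihedral_group (n div 2))) \<and>
              \<psi> 1 (dih_a (n div 2)) = inv\<^bsub>dihedral_group (n div 2)\<^esub> (dih_a (n div 2)) \<and>
              \<psi> 1 (dih_x (n div 2)) = dih_a (n div 2) \<otimes>\<^bsub>dihedral_group (n div 2)\<^esub> dih_x (n div 2)) \<and>
        (\<forall>\<psi>. \<psi> \<in> hom (integer_mod_group 2) (AutoGroup (dihedral_group (n div 2))) \<and>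
              \<psi> 1 (dih_a (n div 2)) = inv\<^bsub>dihedral_group (n div 2)\<^esub> (dih_a (n div 2)) \<and>
              \<psi> 1 (dih_x (n div 2)) = dih_a (n div 2) \<otimes>\<^bsub>dihedral_group (n div 2)\<^esub> dih_x (n div 2) \<longrightarrow>
              dihedral_group n \<cong> semidirect_product (dihedral_group (n div 2)) (integer_mod_group 2) \<psi>)"
proof -
  define k where "k = n div 2"
  have n: "n = 2 * k" using assms(2) k_def by simp
  have kpos: "k > 0" using assms(1) n by simp
  have ac: "dih_a k \<in> carrier (D k)" "dih_x k \<in> carrier (D k)"
    using kpos by (auto simp: dih_a_def dih_x_def)
  have ta: "tau k (dih_a k) = inv\<^bsub>D k\<^esub> (dih_a k)"
    using ac D_inv[OF kpos, of "1 mod int k" False] by (simp add: tau_def dih_a_def)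
  have tx: "tau k (dih_x k) = dih_a k \<otimes>\<^bsub>D k\<^esub> dih_x k"
    using ac by (simp add: tau_def dih_a_def dih_x_def)
  have ex: "\<exists>\<psi>. \<psi> \<in> hom (integer_mod_group 2) (AutoGroup (D k)) \<and>
              \<psi> 1 (dih_a k) = inv\<^bsub>D k\<^esub> (dih_a k) \<and> \<psi> 1 (dih_x k) = dih_a k \<otimes>\<^bsub>D k\<^esub> dih_x k"
    using psi0_hom[OF kpos] ta tx by (intro exI[of _ "psi0 k"]) (simp add: psi0_def)
  have all: "D n \<cong> semidirect_product (D k) (integer_mod_group 2) \<psi>"
    if psi: "\<psi> \<in> hom (integer_mod_group 2) (AutoGroup (D k))"
      "\<psi> 1 (dih_a k) = inv\<^bsub>D k\<^esub> (dih_a k)" "\<psi> 1 (dih_x k) = dih_a k \<otimes>\<^bsub>D k\<^esub> dih_x k" for \<psi>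
  proof -
    have GA: "group (AutoGroup (D k))" by (rule group.AutoGroup[OF group_D[OF kpos]])
    have c1: "(1::int) \<in> carrier (integer_mod_group 2)" by simp
    have p1a: "\<psi> 1 \<in> auto (D k)" using hom_in_carrier[OF psi(1) c1] by simp
    have psi1: "\<psi> 1 = tau k"
    proof (rule auto_ext_eq[OF p1a tau_auto[OF kpos]])
      fix g assume g: "g \<in> carrier (D k)"
      show "\<psi> 1 g = tau k g"
        by (rule dih_gen[OF kpos group_D[OF kpos] auto_hom[OF p1a] auto_hom[OF tau_auto[OF kpos]] _ _ g])
           (simp_all add: psi ta tx)
    qed
    have psi0': "\<psi> 0 = (\<lambda>x\<in>carrier (D k). x)"
      using hom_one[OF psi(1) group_integer_mod_group GA] by simp
    have psie: "\<psi> e (j, c) = (if e = 1 then ((if c then 1 - j else - j) mod int k, c) else (j, c))"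
      if "e = 0 \<or> e = 1" "(j, c) \<in> carrier (D k)" for e j c
      using that psi1 psi0' by (auto simp: tau_def)
    define F where "F = (\<lambda>((i::int, b::bool), e::int).
        ((2 * i + (if e = 1 then (if b then -1 else 1) else 0)) mod int n, b \<noteq> (e = 1)))"
    have nk: "int n = 2 * int k" using n by simp
    have key: "2 * (z mod int k) = (2 * z) mod int n" for z
      using nk by (simp only: mult_mod_right)
    have hom: "F \<in> hom (semidirect_product (D k) (integer_mod_group 2) \<psi>) (D n)"
    proof (rule homI)
      fix x assume "x \<in> carrier (semidirect_product (D k) (integer_mod_group 2) \<psi>)"
      then show "F x \<in> carrier (D n)" using kpos n by (auto simp: F_def)
    next
      fix x y assume xy0: "x \<in> carrier (semidirect_product (D k) (integer_mod_group 2) \<psi>)"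
        "y \<in> carrier (semidirect_product (D k) (integer_mod_group 2) \<psi>)"
      obtain i b e j c e' where xy: "x = ((i, b), e)" "y = ((j, c), e')" by (cases x; cases y) auto
      have r: "0 \<le> i" "i < int k" "0 \<le> j" "j < int k" "e = 0 \<or> e = 1" "e' = 0 \<or> e' = 1"
        using xy0 xy by (auto simp: Z_carrier)
      show "F (x \<otimes>\<^bsub>semidirect_product (D k) (integer_mod_group 2) \<psi>\<^esub> y) = F x \<otimes>\<^bsub>D n\<^esub> F y"
        using r(5,6) unfolding xy
        apply (elim disjE; cases b; cases c)
        apply (simp_all add: psie r F_def)
        apply (simp_all only: key right_diff_distrib distrib_left mod_simps mod_mod_trivial)
        apply (rule arg_cong[where f="\<lambda>x. x mod int n"]; simp)+
        done
    qed
    have inj: "inj_on F (carrier (semidirect_product (D k) (integer_mod_group 2) \<psi>))"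
    proof (rule inj_onI)
      fix x y assume xy0: "x \<in> carrier (semidirect_product (D k) (integer_mod_group 2) \<psi>)"
        "y \<in> carrier (semidirect_product (D k) (integer_mod_group 2) \<psi>)" "F x = F y"
      obtain i b e j c e' where xy: "x = ((i, b), e)" "y = ((j, c), e')" by (cases x; cases y) auto
      have r: "0 \<le> i" "i < int k" "0 \<le> j" "j < int k" "e = 0 \<or> e = 1" "e' = 0 \<or> e' = 1"
        using xy0 xy by (auto simp: Z_carrier)
      define s where "s = (if e = 1 then (if b then -1 else 1) else (0::int))"
      define s' where "s' = (if e' = 1 then (if c then -1 else 1) else (0::int))"
      have eqs: "(2 * i + s) mod int n = (2 * j + s') mod int n" "(b \<noteq> (e = 1)) = (c \<noteq> (e' = 1))"
        using xy0(3) unfolding xy F_def s_def s'_def by auto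
      have dv: "int n dvd (2 * i + s) - (2 * j + s')" using eqs(1) by (simp add: mod_eq_dvd_iff)
      have "(2::int) dvd int n" using nk by simp
      from dvd_trans[OF this dv] have "2 dvd (2 * i + s) - (2 * j + s')" .
      then have "even s = even s'" by presburger
      moreover have "odd s \<longleftrightarrow> e = 1" "odd s' \<longleftrightarrow> e' = 1" unfolding s_def s'_def using r(5,6) by auto
      ultimately have ee: "e = e'" using r(5,6) by auto
      then have bc: "b = c" using eqs(2) by auto
      have "s = s'" using ee bc by (simp add: s_def s'_def)
      then have "(2 * i + s) - (2 * j + s') = 2 * (i - j)" by (simp add: algebra_simps)
      then have "2 * int k dvd 2 * (i - j)" using dv nk by simp
      then have "int k dvd i - j" by (metis zero_neq_numeral dvd_mult_cancel_left)
      then have "i = j" using r(1-4) dvd_imp_le_int[of "i - j" "int k"] by (cases "i = j") auto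
      then show "x = y" using xy ee bc by simp
    qed
    have bij: "bij_betw F (carrier (semidirect_product (D k) (integer_mod_group 2) \<psi>)) (carrier (D n))"
    proof (rule inj_card_bij[OF D_finite inj])
      show "F ` carrier (semidirect_product (D k) (integer_mod_group 2) \<psi>) \<subseteq> carrier (D n)"
        using hom_carrier[OF hom] .
      show "card (carrier (semidirect_product (D k) (integer_mod_group 2) \<psi>)) = card (carrier (D n))"
        using D_order[of n] D_order[of k] n by (simp add: order_def card_cartesian_product Z_carrier)
    qed
    show ?thesis
      by (rule iso_sym_closed[OF isoI[OF hom bij]])
         (rule semi_closed[OF group_D[OF kpos] group_integer_mod_group psi(1)])
  qed
  show ?thesis unfolding k_def[symmetric] using ex all by blast
qed



lemma decomp:
  assumes G: "group G" and K: "group K" and Q: "group Q" and phi: "\<phi> \<in> hom Q (AutoGroup K)"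
    and f: "f \<in> iso G (semidirect_product K Q \<phi>)"
  defines "N \<equiv> {x \<in> carrier G. snd (f x) = \<one>\<^bsub>Q\<^esub>}" and "H \<equiv> {x \<in> carrier G. fst (f x) = \<one>\<^bsub>K\<^esub>}"
  shows "N \<lhd> G" "subgroup H G" "N \<inter> H = {\<one>\<^bsub>G\<^esub>}" "card N = card (carrier K)" "card H = card (carrier Q)"
    "K \<cong> G\<lparr>carrier := N\<rparr>" "Q \<cong> G\<lparr>carrier := H\<rparr>"
proof -
  let ?S = "semidirect_product K Q \<phi>"
  have fh: "f \<in> hom G ?S" and fb: "bij_betw f (carrier G) (carrier ?S)" using f by (auto simp: iso_def)
  have fS: "f x \<in> carrier K \<times> carrier Q" if "x \<in> carrier G" for x
    using hom_in_carrier[OF fh that] by simp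
  have fm: "f (x \<otimes>\<^bsub>G\<^esub> y) = f x \<otimes>\<^bsub>?S\<^esub> f y" if "x \<in> carrier G" "y \<in> carrier G" for x y
    using hom_mult[OF fh that] .
  have G1: "\<one>\<^bsub>G\<^esub> \<in> carrier G" by (rule monoid.one_closed[OF group.is_monoid[OF G]])
  have GA: "group (AutoGroup K)" by (rule group.AutoGroup[OF K])
  have phiq: "\<phi> q \<in> auto K" if "q \<in> carrier Q" for q using hom_in_carrier[OF phi that] by simp
  have phi1: "\<phi> \<one>\<^bsub>Q\<^esub> k = k" if "k \<in> carrier K" for k
    using hom_one[OF phi Q GA] that by simp
  have phiq1: "\<phi> q \<one>\<^bsub>K\<^esub> = \<one>\<^bsub>K\<^esub>" if "q \<in> carrier Q" for q
    using hom_one[OF auto_hom[OF phiq[OF that]] K K] .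
  have phik: "\<phi> q k \<in> carrier K" if "q \<in> carrier Q" "k \<in> carrier K" for q k
    using hom_in_carrier[OF auto_hom[OF phiq[OF that(1)]] that(2)] .
  have f1: "f \<one>\<^bsub>G\<^esub> = (\<one>\<^bsub>K\<^esub>, \<one>\<^bsub>Q\<^esub>)"
  proof -
    obtain a q where aq: "f \<one>\<^bsub>G\<^esub> = (a, q)" by (cases "f \<one>\<^bsub>G\<^esub>")
    have inK: "a \<in> carrier K" "q \<in> carrier Q" using fS[OF monoid.one_closed[OF group.is_monoid[OF G]]] aq by auto
    have "(a, q) = (a \<otimes>\<^bsub>K\<^esub> \<phi> q a, q \<otimes>\<^bsub>Q\<^esub> q)"
      using fm[OF monoid.one_closed[OF group.is_monoid[OF G]] monoid.one_closed[OF group.is_monoid[OF G]]] aq by (simp add: monoid.l_one[OF group.is_monoid[OF G] G1])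
    then have e: "a = a \<otimes>\<^bsub>K\<^esub> \<phi> q a" "q = q \<otimes>\<^bsub>Q\<^esub> q" by auto
    then have q1: "q = \<one>\<^bsub>Q\<^esub>" using group.l_cancel_one'[OF Q inK(2) inK(2)] by simp
    then have "a = a \<otimes>\<^bsub>K\<^esub> a" using e(1) phi1[OF inK(1)] by simp
    then have "a = \<one>\<^bsub>K\<^esub>" using group.l_cancel_one'[OF K inK(1) inK(1)] by simp
    then show ?thesis using aq q1 by simp
  qed
  have pih: "(snd \<circ> f) \<in> hom G Q"
  proof (rule homI)
    fix x assume "x \<in> carrier G" then show "(snd \<circ> f) x \<in> carrier Q" using fS by force
  next
    fix x y assume xy: "x \<in> carrier G" "y \<in> carrier G"
    obtain a q b r where e: "f x = (a, q)" "f y = (b, r)" by (cases "f x"; cases "f y")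
    show "(snd \<circ> f) (x \<otimes>\<^bsub>G\<^esub> y) = (snd \<circ> f) x \<otimes>\<^bsub>Q\<^esub> (snd \<circ> f) y"
      using fm[OF xy] e by simp
  qed
  have gh: "group_hom G Q (snd \<circ> f)" using pih G Q by (simp add: group_hom_def group_hom_axioms_def)
  have Nk: "N = kernel G Q (snd \<circ> f)" by (simp add: N_def kernel_def)
  show "N \<lhd> G" unfolding Nk by (rule group_hom.normal_kernel[OF gh])
  show "subgroup H G"
  proof (rule group.subgroupI[OF G])
    show "H \<subseteq> carrier G" by (auto simp: H_def)
    show "H \<noteq> {}" using f1 monoid.one_closed[OF group.is_monoid[OF G]] by (auto simp: H_def)
  next
    fix a assume a: "a \<in> H"
    then have ac: "a \<in> carrier G" by (simp add: H_def)
    have ic: "inv\<^bsub>G\<^esub> a \<in> carrier G" using group.inv_closed[OF G ac] .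
    obtain b q where e: "f (inv\<^bsub>G\<^esub> a) = (b, q)" by (cases "f (inv\<^bsub>G\<^esub> a)")
    obtain r where e2: "f a = (\<one>\<^bsub>K\<^esub>, r)" using a by (cases "f a") (auto simp: H_def)
    have bq: "b \<in> carrier K" "q \<in> carrier Q" using fS[OF ic] e by auto
    have "(\<one>\<^bsub>K\<^esub>, \<one>\<^bsub>Q\<^esub>) = (b \<otimes>\<^bsub>K\<^esub> \<phi> q \<one>\<^bsub>K\<^esub>, q \<otimes>\<^bsub>Q\<^esub> r)"
      using fm[OF ic ac] e e2 f1 group.l_inv[OF G ac] by simp
    then have "b = \<one>\<^bsub>K\<^esub>" using phiq1[OF bq(2)] monoid.r_one[OF group.is_monoid[OF K] bq(1)] by simp
    then show "inv\<^bsub>G\<^esub> a \<in> H" using ic e by (simp add: H_def)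
  next
    fix a b assume ab: "a \<in> H" "b \<in> H"
    then have c: "a \<in> carrier G" "b \<in> carrier G" by (auto simp: H_def)
    obtain q where e1: "f a = (\<one>\<^bsub>K\<^esub>, q)" using ab by (cases "f a") (auto simp: H_def)
    obtain r where e2: "f b = (\<one>\<^bsub>K\<^esub>, r)" using ab by (cases "f b") (auto simp: H_def)
    have q: "q \<in> carrier Q" using fS[OF c(1)] e1 by auto
    have "fst (f (a \<otimes>\<^bsub>G\<^esub> b)) = \<one>\<^bsub>K\<^esub>"
      using fm[OF c] e1 e2 phiq1[OF q] monoid.l_one[OF group.is_monoid[OF K] monoid.one_closed[OF group.is_monoid[OF K]]] by simp
    then show "a \<otimes>\<^bsub>G\<^esub> b \<in> H" using monoid.m_closed[OF group.is_monoid[OF G] c] by (simp add: H_def)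
  qed
  have finj: "inj_on f (carrier G)" using fb by (simp add: bij_betw_def)
  show "N \<inter> H = {\<one>\<^bsub>G\<^esub>}"
  proof
    show "N \<inter> H \<subseteq> {\<one>\<^bsub>G\<^esub>}"
    proof
      fix x assume x: "x \<in> N \<inter> H"
      then have "f x = f \<one>\<^bsub>G\<^esub>" "x \<in> carrier G" using f1 by (auto simp: N_def H_def prod_eq_iff)
      then show "x \<in> {\<one>\<^bsub>G\<^esub>}" using inj_onD[OF finj] monoid.one_closed[OF group.is_monoid[OF G]] by auto
    qed
    show "{\<one>\<^bsub>G\<^esub>} \<subseteq> N \<inter> H" using f1 monoid.one_closed[OF group.is_monoid[OF G]] by (auto simp: N_def H_def)
  qed
  have fsurj: "\<exists>x\<in>carrier G. f x = y" if "y \<in> carrier K \<times> carrier Q" for y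
  proof -
    have "y \<in> f ` carrier G" using fb that by (simp add: bij_betw_def)
    then show ?thesis by blast
  qed
  have bN: "bij_betw (fst \<circ> f) N (carrier K)"
  proof (rule bij_betw_imageI)
    show "inj_on (fst \<circ> f) N"
    proof (rule inj_onI)
      fix x y assume "x \<in> N" "y \<in> N" "(fst \<circ> f) x = (fst \<circ> f) y"
      then have "f x = f y" "x \<in> carrier G" "y \<in> carrier G" by (auto simp: N_def prod_eq_iff)
      then show "x = y" using inj_onD[OF finj] by blast
    qed
    show "(fst \<circ> f) ` N = carrier K"
    proof
      show "(fst \<circ> f) ` N \<subseteq> carrier K" using fS by (force simp: N_def)
      show "carrier K \<subseteq> (fst \<circ> f) ` N"
      proof
        fix k assume "k \<in> carrier K"
        then obtain x where "x \<in> carrier G" "f x = (k, \<one>\<^bsub>Q\<^esub>)" using fsurj[of "(k, \<one>\<^bsub>Q\<^esub>)"] monoid.one_closed[OF group.is_monoid[OF Q]] by auto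
        then show "k \<in> (fst \<circ> f) ` N" by (force simp: N_def)
      qed
    qed
  qed
  have bH: "bij_betw (snd \<circ> f) H (carrier Q)"
  proof (rule bij_betw_imageI)
    show "inj_on (snd \<circ> f) H"
    proof (rule inj_onI)
      fix x y assume "x \<in> H" "y \<in> H" "(snd \<circ> f) x = (snd \<circ> f) y"
      then have "f x = f y" "x \<in> carrier G" "y \<in> carrier G" by (auto simp: H_def prod_eq_iff)
      then show "x = y" using inj_onD[OF finj] by blast
    qed
    show "(snd \<circ> f) ` H = carrier Q"
    proof
      show "(snd \<circ> f) ` H \<subseteq> carrier Q" using fS by (force simp: H_def)
      show "carrier Q \<subseteq> (snd \<circ> f) ` H"
      proof
        fix q assume "q \<in> carrier Q"
        then obtain x where "x \<in> carrier G" "f x = (\<one>\<^bsub>K\<^esub>, q)" using fsurj[of "(\<one>\<^bsub>K\<^esub>, q)"] monoid.one_closed[OF group.is_monoid[OF K]] by auto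
        then show "q \<in> (snd \<circ> f) ` H" by (force simp: H_def)
      qed
    qed
  qed
  show "card N = card (carrier K)" using bij_betw_same_card[OF bN] .
  show "card H = card (carrier Q)" using bij_betw_same_card[OF bH] .
  have Nsub: "subgroup N G" using \<open>N \<lhd> G\<close> by (simp add: normal_def)
  have homN: "(fst \<circ> f) \<in> hom (G\<lparr>carrier := N\<rparr>) K"
  proof (rule homI)
    fix x assume "x \<in> carrier (G\<lparr>carrier := N\<rparr>)" then show "(fst \<circ> f) x \<in> carrier K"
      using bN by (auto simp: bij_betw_def)
  next
    fix x y assume xy: "x \<in> carrier (G\<lparr>carrier := N\<rparr>)" "y \<in> carrier (G\<lparr>carrier := N\<rparr>)"
    then have c: "x \<in> carrier G" "y \<in> carrier G" by (auto simp: N_def)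
    obtain a where e1: "f x = (a, \<one>\<^bsub>Q\<^esub>)" using xy by (cases "f x") (auto simp: N_def)
    obtain b where e2: "f y = (b, \<one>\<^bsub>Q\<^esub>)" using xy by (cases "f y") (auto simp: N_def)
    have b: "b \<in> carrier K" using fS[OF c(2)] e2 by auto
    show "(fst \<circ> f) (x \<otimes>\<^bsub>G\<lparr>carrier := N\<rparr>\<^esub> y) = (fst \<circ> f) x \<otimes>\<^bsub>K\<^esub> (fst \<circ> f) y"
      using fm[OF c] e1 e2 phi1[OF b] by simp
  qed
  have "G\<lparr>carrier := N\<rparr> \<cong> K" using homN bN by (auto intro!: is_isoI isoI)
  then show "K \<cong> G\<lparr>carrier := N\<rparr>" by (rule group.iso_sym[OF subgroup.subgroup_is_group[OF Nsub G]])
  have homH: "(snd \<circ> f) \<in> hom (G\<lparr>carrier := H\<rparr>) Q"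
    using pih by (auto simp: hom_def H_def)
  have "G\<lparr>carrier := H\<rparr> \<cong> Q" using homH bH by (auto intro!: is_isoI isoI)
  then show "Q \<cong> G\<lparr>carrier := H\<rparr>" by (rule group.iso_sym[OF subgroup.subgroup_is_group[OF \<open>subgroup H G\<close> G]])
qed



lemma hom_inj_iso_image:
  assumes "f \<in> hom A B" "inj_on f (carrier A)"
  shows "f \<in> iso A (B\<lparr>carrier := f ` carrier A\<rparr>)"
  using assms by (auto simp: iso_def hom_def bij_betw_def)

lemma emb_image_card: assumes "n = m * d" "m > 0" "d > 0"
  shows "card (emb n m j ` carrier (D d)) = 2 * d"
  using card_image[OF emb_inj[OF assms]] D_order[of d] by (simp add: order_def)

definition Rot :: "nat \<Rightarrow> (int \<times> bool) set" where "Rot n = {0..<int n} \<times> {False}"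

lemma Rot_sub: assumes "n > 0" shows "subgroup (Rot n) (D n)"
proof (rule group.subgroupI[OF group_D[OF assms]])
  show "Rot n \<subseteq> carrier (D n)" by (auto simp: Rot_def D_carrier)
  show "Rot n \<noteq> {}" using assms by (auto simp: Rot_def)
next
  fix a assume "a \<in> Rot n" then show "inv\<^bsub>D n\<^esub> a \<in> Rot n"
    using D_inv[OF assms] assms by (auto simp: Rot_def)
next
  fix a b assume "a \<in> Rot n" "b \<in> Rot n" then show "a \<otimes>\<^bsub>D n\<^esub> b \<in> Rot n"
    using assms by (auto simp: Rot_def)
qed

lemma cyc_sub:
  assumes n: "n > 0" and S: "subgroup S (D n)" and SR: "S \<subseteq> Rot n"
  shows "card S dvd n" "S = (\<lambda>t. (int (n div card S) * t, False)) ` {0..<int (card S)}"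
proof -
  have G: "group (D n)" by (rule group_D[OF n])
  have fS: "finite S" using SR by (rule finite_subset) (simp add: Rot_def)
  define c where "c = card S"
  have GR: "group (D n\<lparr>carrier := Rot n\<rparr>)" by (rule subgroup.subgroup_is_group[OF Rot_sub[OF n] G])
  have SGR: "subgroup S (D n\<lparr>carrier := Rot n\<rparr>)" by (rule group.subgroup_incl[OF G S Rot_sub[OF n] SR])
  have "card (rcosets\<^bsub>D n\<lparr>carrier := Rot n\<rparr>\<^esub> S) * card S = order (D n\<lparr>carrier := Rot n\<rparr>)"
    by (rule group.lagrange[OF GR SGR])
  moreover have "order (D n\<lparr>carrier := Rot n\<rparr>) = n" by (simp add: order_def Rot_def)
  ultimately show cd: "card S dvd n" by (metis dvd_triv_right)
  then have cpos: "c > 0" using n c_def by (metis dvd_0_left_iff gr0I less_not_refl2)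
  define d where "d = n div c"
  have nd: "n = c * d" using cd c_def d_def by simp
  have dpos: "d > 0" using n nd by (cases d) auto
  have GS: "group (D n\<lparr>carrier := S\<rparr>)" by (rule subgroup.subgroup_is_group[OF S G])
  have sub: "S \<subseteq> (\<lambda>t. (int d * t, False)) ` {0..<int c}"
  proof
    fix x assume x: "x \<in> S"
    then obtain i where xi: "x = (i, False)" "0 \<le> i" "i < int n" using SR by (auto simp: Rot_def)
    have "x [^]\<^bsub>D n\<lparr>carrier := S\<rparr>\<^esub> order (D n\<lparr>carrier := S\<rparr>) = \<one>\<^bsub>D n\<lparr>carrier := S\<rparr>\<^esub>"
      using group.pow_order_eq_1[OF GS] x by simp
    then have "x [^]\<^bsub>D n\<^esub> c = \<one>\<^bsub>D n\<^esub>"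
      using monoid.nat_pow_consistent[OF group.is_monoid[OF G], of x c S] by (simp add: order_def c_def)
    then have "(int c * i) mod int n = 0" using xi by (simp add: D_pow)
    then have "int c * int d dvd int c * i" using nd by (simp add: mod_eq_0_iff_dvd)
    then have "int d dvd i" using cpos by simp
    then obtain t where t: "i = int d * t" by (auto elim: dvdE)
    have "0 \<le> t" using xi(2) t dpos by (simp add: zero_le_mult_iff)
    moreover have "t < int c"
    proof (rule ccontr)
      assume "\<not> t < int c"
      then have "int d * int c \<le> int d * t" using dpos by simp
      then show False using xi(3) t nd by (simp add: mult.commute)
    qed
    ultimately show "x \<in> (\<lambda>t. (int d * t, False)) ` {0..<int c}" using xi t by auto
  qed
  have inj: "inj_on (\<lambda>t. (int d * t, False)) {0..<int c}"
    using dpos by (auto simp: inj_on_def)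
  have cimg: "card ((\<lambda>t. (int d * t, False)) ` {0..<int c}) = c"
    using card_image[OF inj] by simp
  have eq: "S = (\<lambda>t. (int d * t, False)) ` {0..<int c}"
    by (rule card_subset_eq[OF _ sub]) (simp_all only: cimg c_def[symmetric] finite_imageI finite_atLeastLessThan_int)
  then show "S = (\<lambda>t. (int (n div card S) * t, False)) ` {0..<int (card S)}"
    unfolding d_def c_def .
qed

lemma cyc_iso:
  assumes "m > 0" "d > 0" "n = m * d"
  shows "D n\<lparr>carrier := (\<lambda>t. (int d * t, False)) ` {0..<int m}\<rparr> \<cong> integer_mod_group m"
proof -
  let ?c = "\<lambda>t. (int d * t, False)"
  have hom: "?c \<in> hom (integer_mod_group m) (D n)"
  proof (rule homI)
    fix x assume "x \<in> carrier (integer_mod_group m)"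
    then have "0 \<le> x" "x < int m" using assms by (auto simp: Z_carrier)
    moreover have "int d * x < int n"
    proof -
      have "int d * x < int d * int m" using \<open>x < int m\<close> assms by simp
      then show ?thesis using assms by (simp add: mult.commute)
    qed
    ultimately show "?c x \<in> carrier (D n)" using assms by simp
  next
    fix x y assume xy: "x \<in> carrier (integer_mod_group m)" "y \<in> carrier (integer_mod_group m)"
    have "int d * ((x + y) mod int m) = (int d * (x + y)) mod (int d * int m)" by (rule mult_mod_right)
    then have "int d * ((x + y) mod int m) = (int d * x + int d * y) mod int n"
      using assms by (simp add: distrib_left mult.commute)
    then show "?c (x \<otimes>\<^bsub>integer_mod_group m\<^esub> y) = ?c x \<otimes>\<^bsub>D n\<^esub> ?c y" by simp
  qed
  have inj: "inj_on ?c (carrier (integer_mod_group m))"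
    using assms by (auto simp: inj_on_def)
  have "integer_mod_group m \<cong> D n\<lparr>carrier := ?c ` carrier (integer_mod_group m)\<rparr>"
    by (rule is_isoI[OF hom_inj_iso_image[OF hom inj]])
  then have "D n\<lparr>carrier := ?c ` carrier (integer_mod_group m)\<rparr> \<cong> integer_mod_group m"
    by (rule group.iso_sym[OF group_integer_mod_group])
  then show ?thesis using assms by (simp add: Z_carrier)
qed

lemma caseA:
  assumes n: "n > 0" and N: "N \<lhd> D n" and H: "subgroup H (D n)" and NH: "N \<inter> H = {(0, False)}"
    and card: "card N * card H = 2 * n" and N1: "card N > 1" and NR: "N \<subseteq> Rot n"
  shows "\<exists>m. m dvd n \<and> coprime m (n div m) \<and> D n\<lparr>carrier := N\<rparr> \<cong> integer_mod_group m
           \<and> D n\<lparr>carrier := H\<rparr> \<cong> D (n div m)"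
proof -
  have G: "group (D n)" by (rule group_D[OF n])
  have Nsub: "subgroup N (D n)" using N by (simp add: normal_def)
  define m where "m = card N"
  have mdvd: "m dvd n" using cyc_sub(1)[OF n Nsub NR] m_def by simp
  define d where "d = n div m"
  have nmd: "n = m * d" using mdvd d_def by simp
  have mpos: "m > 0" using N1 m_def by simp
  have dpos: "d > 0" using n nmd by (cases d) auto
  have Neq: "N = (\<lambda>t. (int d * t, False)) ` {0..<int m}" using cyc_sub(2)[OF n Nsub NR] m_def d_def by simp
  define E where "E = H \<inter> Rot n"
  have Esub: "subgroup E (D n)" unfolding E_def by (rule group.subgroups_Inter_pair[OF G H Rot_sub[OF n]])
  define e where "e = card E"
  have edvd: "e dvd n" using cyc_sub(1)[OF n Esub] e_def E_def by simp
  have Eeq: "E = (\<lambda>t. (int (n div e) * t, False)) ` {0..<int e}" using cyc_sub(2)[OF n Esub] e_def E_def by simp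
  have HC: "H \<subseteq> carrier (D n)" using subgroup.subset[OF H] .
  have fH: "finite H" using finite_subset[OF HC D_finite] .
  have fE: "finite E" using fH by (simp add: E_def)
  have cop: "coprime m e"
  proof (rule ccontr)
    assume "\<not> coprime m e"
    then have "gcd m e \<noteq> 1" by (simp add: coprime_iff_gcd_eq_1)
    then obtain p where p: "Factorial_Ring.prime p" "p dvd gcd m e" using prime_factor_nat by blast
    then have pm: "p dvd m" and pe: "p dvd e" by auto
    obtain m' where m': "m = p * m'" using pm by (auto elim: dvdE)
    obtain e' where e': "e = p * e'" using pe by (auto elim: dvdE)
    have ppos: "p > 0" using p(1) prime_gt_0_nat by blast
    have m'pos: "m' > 0" using mpos m' by (cases m') auto
    have epos: "e > 0" using edvd n by (cases e) auto
    obtain f where f: "n = e * f" using edvd by (auto elim: dvdE)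
    have fpos: "f > 0" using n f by (cases f) auto
    have e'pos: "e' > 0" using epos e' by (cases e') auto
    have ndf: "n div e = f" using f epos by simp
    define x where "x = (int (m' * d), False)"
    have xN: "x \<in> N"
    proof -
      have "int m' < int m" unfolding m' using prime_gt_1_nat[OF p(1)] m'pos by simp
      then show ?thesis unfolding Neq x_def by (intro image_eqI[of _ _ "int m'"]) (auto simp: mult.commute)
    qed
    have "m' * d = e' * f" using nmd f m' e' ppos by (metis mult.assoc mult_cancel_left not_gr0)
    then have xE: "x \<in> E"
    proof -
      assume eq: "m' * d = e' * f"
      have "int e' < int e" unfolding e' using prime_gt_1_nat[OF p(1)] e'pos by simp
      then show ?thesis unfolding Eeq x_def ndf eq by (intro image_eqI[of _ _ "int e'"]) (auto simp: mult.commute)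
    qed
    have "x \<in> N \<inter> H" using xN xE by (simp add: E_def)
    then have "x = (0, False)" using NH by auto
    then show False using m'pos dpos by (simp add: x_def)
  qed
  have cardH: "card H \<le> 2 * e"
  proof (cases "H \<subseteq> Rot n")
    case True
    then have "H \<subseteq> E" by (simp add: E_def)
    then have "card H \<le> e" using card_mono[OF fE] unfolding e_def by blast
    then show ?thesis by simp
  next
    case False
    then obtain h where h: "h \<in> H" "h \<notin> Rot n" by auto
    then obtain j where hj: "h = (j, True)" "0 \<le> j" "j < int n" using HC by (cases h) (auto simp: Rot_def)
    have ref: "y \<in> H - Rot n \<Longrightarrow> \<exists>i. y = (i, True) \<and> 0 \<le> i \<and> i < int n" for y
      using HC by (cases y) (auto simp: Rot_def)
    have "inj_on (\<lambda>y. h \<otimes>\<^bsub>D n\<^esub> y) (H - Rot n)"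
    proof (rule inj_onI)
      fix y y' assume yy: "y \<in> H - Rot n" "y' \<in> H - Rot n" "h \<otimes>\<^bsub>D n\<^esub> y = h \<otimes>\<^bsub>D n\<^esub> y'"
      obtain i i' where ii: "y = (i, True)" "0 \<le> i" "i < int n" "y' = (i', True)" "0 \<le> i'" "i' < int n"
        using ref[OF yy(1)] ref[OF yy(2)] by blast
      have "(j - i) mod int n = (j - i') mod int n" using yy(3) ii hj by simp
      then have "int n dvd (j - i) - (j - i')" by (simp add: mod_eq_dvd_iff)
      then have "int n dvd i' - i" by simp
      then have "i = i'" using ii dvd_imp_le_int[of "i' - i" "int n"] by (cases "i = i'") auto
      then show "y = y'" using ii by simp
    qed
    moreover have "(\<lambda>y. h \<otimes>\<^bsub>D n\<^esub> y) ` (H - Rot n) \<subseteq> E"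
    proof
      fix z assume "z \<in> (\<lambda>y. h \<otimes>\<^bsub>D n\<^esub> y) ` (H - Rot n)"
      then obtain y where y: "y \<in> H - Rot n" "z = h \<otimes>\<^bsub>D n\<^esub> y" by auto
      obtain i where i: "y = (i, True)" using ref[OF y(1)] by blast
      have "z \<in> H" using subgroup.m_closed[OF H h(1)] y by auto
      moreover have "z \<in> Rot n" using y i hj n by (simp add: Rot_def)
      ultimately show "z \<in> E" by (simp add: E_def)
    qed
    ultimately have "card (H - Rot n) \<le> e" using card_inj_on_le fE unfolding e_def by blast
    moreover have "card H \<le> card E + card (H - Rot n)"
    proof -
      have "H \<subseteq> E \<union> (H - Rot n)" by (auto simp: E_def)
      then have "card H \<le> card (E \<union> (H - Rot n))" using card_mono[of "E \<union> (H - Rot n)" H] fH fE by blast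
      also have "\<dots> \<le> card E + card (H - Rot n)" by (rule card_Un_le)
      finally show ?thesis .
    qed
    ultimately show ?thesis using e_def by simp
  qed
  have "e dvd m * d" using edvd nmd by simp
  then have ed: "e dvd d" using cop by (simp add: coprime_commute coprime_dvd_mult_right_iff)
  have cH: "card H = 2 * d" using card nmd m_def mpos by simp
  have "e = d" using ed cH cardH dpos by (simp add: dvd_imp_le le_antisym)
  then have copd: "coprime m (n div m)" using cop d_def by simp
  have Eeq': "E = (\<lambda>t. (int m * t, False)) ` {0..<int d}" using Eeq \<open>e = d\<close> nmd dpos by simp
  obtain h where h: "h \<in> H" "h \<notin> Rot n"
  proof -
    have "\<not> H \<subseteq> E"
    proof
      assume "H \<subseteq> E"
      then have "card H \<le> card E" using card_mono[OF fE] by blast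
      then show False using cH e_def \<open>e = d\<close> dpos by simp
    qed
    then show ?thesis using that by (auto simp: E_def)
  qed
  then obtain j where hj: "h = (j, True)" "0 \<le> j" "j < int n" using HC by (cases h) (auto simp: Rot_def)
  have img: "emb n m j ` carrier (D d) = H"
  proof (rule card_subset_eq[OF fH])
    show "emb n m j ` carrier (D d) \<subseteq> H"
    proof
      fix z assume "z \<in> emb n m j ` carrier (D d)"
      then obtain t b where tb: "z = emb n m j (t, b)" "0 \<le> t" "t < int d" by (auto simp: D_carrier)
      have mt: "0 \<le> int m * t" "int m * t < int n"
      proof -
        show "0 \<le> int m * t" using tb by simp
        have "int m * t < int m * int d" using tb mpos by simp
        then show "int m * t < int n" using nmd by simp
      qed
      have "(int m * t, False) \<in> E" unfolding Eeq' using tb by auto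
      then have inE: "(int m * t, False) \<in> H" by (simp add: E_def)
      show "z \<in> H"
      proof (cases b)
        case False then show ?thesis using tb inE mt by (simp add: emb_def)
      next
        case True
        have "(int m * t, False) \<otimes>\<^bsub>D n\<^esub> h = z" using tb mt True hj by (simp add: emb_def)
        then show ?thesis using subgroup.m_closed[OF H inE h(1)] by simp
      qed
    qed
    show "card (emb n m j ` carrier (D d)) = card H" using emb_image_card[OF nmd mpos dpos] cH by simp
  qed
  have "D d \<cong> D n\<lparr>carrier := H\<rparr>"
    using is_isoI[OF hom_inj_iso_image[OF emb_hom[OF nmd mpos dpos, of j] emb_inj[OF nmd mpos dpos, of j]]] img by simp
  then have HD: "D n\<lparr>carrier := H\<rparr> \<cong> D (n div m)" using group.iso_sym[OF group_D[OF dpos]] d_def by simp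
  have ND: "D n\<lparr>carrier := N\<rparr> \<cong> integer_mod_group m" using cyc_iso[OF mpos dpos nmd] Neq by simp
  show ?thesis using mdvd copd ND HD by blast
qed



lemma caseB:
  assumes n: "n > 0" and N: "N \<lhd> D n" and H: "subgroup H (D n)" and NH: "N \<inter> H = {(0, False)}"
    and card: "card N * card H = 2 * n" and H1: "card H > 1" and NR: "\<not> N \<subseteq> Rot n"
  shows "2 dvd n \<and> D n\<lparr>carrier := N\<rparr> \<cong> D (n div 2) \<and> D n\<lparr>carrier := H\<rparr> \<cong> integer_mod_group 2"
proof -
  have G: "group (D n)" by (rule group_D[OF n])
  have Nsub: "subgroup N (D n)" using N by (simp add: normal_def)
  have NC: "N \<subseteq> carrier (D n)" using subgroup.subset[OF Nsub] .
  have HC: "H \<subseteq> carrier (D n)" using subgroup.subset[OF H] .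
  have fN: "finite N" using finite_subset[OF NC D_finite] .
  have fH: "finite H" using finite_subset[OF HC D_finite] .
  obtain h0 where h0: "h0 \<in> N" "h0 \<notin> Rot n" using NR by auto
  then obtain j where hj: "h0 = (j, True)" "0 \<le> j" "j < int n" using NC by (cases h0) (auto simp: Rot_def)
  have rot2: "((2 * t) mod int n, False) \<in> N" for t
  proof -
    define i where "i = (- t) mod int n"
    have ir: "0 \<le> i" "i < int n" using n by (auto simp: i_def)
    have gc: "(i, False) \<in> carrier (D n)" using ir by simp
    have "(i, False) \<otimes>\<^bsub>D n\<^esub> h0 \<otimes>\<^bsub>D n\<^esub> inv\<^bsub>D n\<^esub> (i, False) \<in> N"
      by (rule normal.inv_op_closed2[OF N gc h0(1)])
    moreover have "(i, False) \<otimes>\<^bsub>D n\<^esub> h0 \<otimes>\<^bsub>D n\<^esub> inv\<^bsub>D n\<^esub> (i, False) = (((i + j) mod int n - (- i) mod int n) mod int n, True)"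
      using D_inv[OF n gc] hj by simp
    ultimately have c1: "(((i + j) mod int n - (- i) mod int n) mod int n, True) \<in> N" by simp
    have "h0 \<otimes>\<^bsub>D n\<^esub> (((i + j) mod int n - (- i) mod int n) mod int n, True) \<in> N"
      by (rule subgroup.m_closed[OF Nsub h0(1) c1])
    moreover have "h0 \<otimes>\<^bsub>D n\<^esub> (((i + j) mod int n - (- i) mod int n) mod int n, True) = ((2 * t) mod int n, False)"
    proof -
      have "((i + j) mod int n - (- i) mod int n) mod int n = ((i + j) - (- i)) mod int n" by (rule mod_diff_eq)
      then have "(j - ((i + j) mod int n - (- i) mod int n) mod int n) mod int n = (j - ((i + j) - (- i)) mod int n) mod int n" by simp
      also have "\<dots> = (j - ((i + j) - (- i))) mod int n" by (rule mod_diff_right_eq)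
      also have "\<dots> = (- 2 * i) mod int n" by (rule arg_cong[where f="\<lambda>x. x mod int n"]) simp
      also have "\<dots> = (- 2 * (- t)) mod int n" unfolding i_def by (rule mod_mult_right_eq)
      also have "\<dots> = (2 * t) mod int n" by simp
      finally show ?thesis using hj by simp
    qed
    ultimately show ?thesis by simp
  qed
  have cN: "card N \<le> n"
  proof -
    have "card N * 2 \<le> card N * card H" using H1 by simp
    then show ?thesis using card by simp
  qed
  have ev: "even n"
  proof (rule ccontr)
    assume od: "odd n"
    have "carrier (D n) \<subseteq> N"
    proof
      fix x assume x: "x \<in> carrier (D n)"
      then obtain r b where rb: "x = (r, b)" "0 \<le> r" "r < int n" by (cases x) auto
      have rotall: "(s, False) \<in> N" if "0 \<le> s" "s < int n" for s
      proof -
        have o: "odd (int n)" using od by simp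
        have q: "2 * ((int n + 1) div 2) = int n + 1" using o by presburger
        have "(2 * (s * ((int n + 1) div 2))) mod int n = (s * (int n + 1)) mod int n"
          using q by (metis mult.left_commute)
        also have "\<dots> = (s + int n * s) mod int n" by (simp add: algebra_simps)
        also have "\<dots> = s" using that by simp
        finally show ?thesis using rot2[of "s * ((int n + 1) div 2)"] by simp
      qed
      show "x \<in> N"
      proof (cases b)
        case False then show ?thesis using rotall rb by simp
      next
        case True
        have l: "((j - r) mod int n, False) \<in> N" using rotall n by simp
        have "h0 \<otimes>\<^bsub>D n\<^esub> ((j - r) mod int n, False) = ((j - (j - r) mod int n) mod int n, True)" using hj by simp
        also have "\<dots> = (r, True)"
        proof -
          have "(j - (j - r) mod int n) mod int n = (j - (j - r)) mod int n" by (rule mod_diff_right_eq)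
          then show ?thesis using rb by simp
        qed
        finally show ?thesis using subgroup.m_closed[OF Nsub h0(1) l] rb True by simp
      qed
    qed
    then have "card (carrier (D n)) \<le> card N" using card_mono[OF fN] by blast
    then show False using cN D_order[of n] n by (simp add: order_def)
  qed
  define k where "k = n div 2"
  have nk: "n = 2 * k" using ev k_def by simp
  have kpos: "k > 0" using n nk by simp
  have sub: "emb n 2 j ` carrier (D k) \<subseteq> N"
  proof
    fix z assume "z \<in> emb n 2 j ` carrier (D k)"
    then obtain t b where tb: "z = emb n 2 j (t, b)" by auto
    show "z \<in> N"
    proof (cases b)
      case False then show ?thesis using tb rot2[of t] by (simp add: emb_def)
    next
      case True
      have "((2 * t) mod int n, False) \<otimes>\<^bsub>D n\<^esub> h0 = z"
        using tb True hj by (simp add: emb_def mod_add_left_eq)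
      then show ?thesis using subgroup.m_closed[OF Nsub rot2[of t] h0(1)] by simp
    qed
  qed
  have ci: "card (emb n 2 j ` carrier (D k)) = n" using emb_image_card[OF nk _ kpos] nk by simp
  have Neq: "emb n 2 j ` carrier (D k) = N"
  proof (rule card_subset_eq[OF fN sub])
    show "card (emb n 2 j ` carrier (D k)) = card N" using card_mono[OF fN sub] ci cN by simp
  qed
  have "D k \<cong> D n\<lparr>carrier := N\<rparr>"
    using is_isoI[OF hom_inj_iso_image[OF emb_hom[OF nk _ kpos, of j] emb_inj[OF nk _ kpos, of j]]] Neq by simp
  then have ND: "D n\<lparr>carrier := N\<rparr> \<cong> D (n div 2)" using group.iso_sym[OF group_D[OF kpos]] k_def by simp
  have cardN: "card N = n" using Neq ci by simp
  have cH: "card H = 2" using card cardN n by simp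
  have one: "(0, False) \<in> H" using subgroup.one_closed[OF H] by simp
  obtain h where h: "h \<in> H" "h \<noteq> (0, False)"
  proof -
    have "H \<noteq> {(0, False)}" using cH by auto
    then show ?thesis using that one by blast
  qed
  have Heq: "H = {(0, False), h}"
  proof -
    have s: "{(0, False), h} \<subseteq> H" using one h by auto
    have "card {(0, False), h} = 2" using h(2) by simp
    then show ?thesis using card_subset_eq[OF fH s] cH by simp
  qed
  have hc: "h \<in> carrier (D n)" using HC h by auto
  have hh: "h \<otimes>\<^bsub>D n\<^esub> h = (0, False)"
  proof -
    have "h \<otimes>\<^bsub>D n\<^esub> h \<in> H" using subgroup.m_closed[OF H h(1) h(1)] .
    moreover have "h \<otimes>\<^bsub>D n\<^esub> h \<noteq> h" using group.l_cancel_one[OF G hc hc] h(2) by simp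
    ultimately show ?thesis using Heq by auto
  qed
  define z where "z = (\<lambda>t::int. if t = 0 then (0::int, False) else h)"
  have Z2: "carrier (integer_mod_group 2) = {0, 1}" by (auto simp: Z_carrier)
  have zhom: "z \<in> hom (integer_mod_group 2) (D n)"
  proof (rule homI)
    fix x assume "x \<in> carrier (integer_mod_group 2)" then show "z x \<in> carrier (D n)"
      using hc n by (auto simp: z_def)
  next
    fix x y assume "x \<in> carrier (integer_mod_group 2)" "y \<in> carrier (integer_mod_group 2)"
    then have xy: "x = 0 \<or> x = 1" "y = 0 \<or> y = 1" using Z2 by auto
    have l1: "(0, False) \<otimes>\<^bsub>D n\<^esub> h = h" using monoid.l_one[OF group.is_monoid[OF G] hc] by simp
    have r1: "h \<otimes>\<^bsub>D n\<^esub> (0, False) = h" using monoid.r_one[OF group.is_monoid[OF G] hc] by simp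
    show "z (x \<otimes>\<^bsub>integer_mod_group 2\<^esub> y) = z x \<otimes>\<^bsub>D n\<^esub> z y"
      using xy l1 r1 hh h(2) by (auto simp: z_def)
  qed
  have zinj: "inj_on z (carrier (integer_mod_group 2))" using h(2) Z2 by (auto simp: z_def inj_on_def)
  have zimg: "z ` carrier (integer_mod_group 2) = H" using Z2 Heq by (auto simp: z_def)
  have "integer_mod_group 2 \<cong> D n\<lparr>carrier := H\<rparr>"
    using is_isoI[OF hom_inj_iso_image[OF zhom zinj]] zimg by simp
  then have HZ: "D n\<lparr>carrier := H\<rparr> \<cong> integer_mod_group 2" by (rule group.iso_sym[OF group_integer_mod_group])
  show ?thesis using ev ND HZ by simp
qed

lemma part4:
  assumes n: "n > 0"
  shows "\<forall>K :: 'a monoid. \<forall>Q :: 'b monoid. \<forall>\<phi>.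
        group K \<and> group Q \<and> \<phi> \<in> hom Q (AutoGroup K) \<and>
        order K > 1 \<and> order Q > 1 \<and>
        dihedral_group n \<cong> semidirect_product K Q \<phi> \<longrightarrow>
        (\<exists>m::nat. m dvd n \<and> coprime m (n div m) \<and>
            K \<cong> integer_mod_group m \<and> Q \<cong> dihedral_group (n div m))
        \<or> (2 dvd n \<and> K \<cong> dihedral_group (n div 2) \<and> Q \<cong> integer_mod_group 2)"
proof (intro allI impI)
  fix K :: "'a monoid" and Q :: "'b monoid" and \<phi>
  assume A: "group K \<and> group Q \<and> \<phi> \<in> hom Q (AutoGroup K) \<and> order K > 1 \<and> order Q > 1 \<and>
        dihedral_group n \<cong> semidirect_product K Q \<phi>"
  then have K: "group K" and Q: "group Q" and phi: "\<phi> \<in> hom Q (AutoGroup K)"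
    and oK: "order K > 1" and oQ: "order Q > 1" and iso: "D n \<cong> semidirect_product K Q \<phi>" by auto
  obtain f where f: "f \<in> iso (D n) (semidirect_product K Q \<phi>)" using iso by (auto simp: is_iso_def)
  define N where "N = {x \<in> carrier (D n). snd (f x) = \<one>\<^bsub>Q\<^esub>}"
  define H where "H = {x \<in> carrier (D n). fst (f x) = \<one>\<^bsub>K\<^esub>}"
  note dc = decomp[OF group_D[OF n] K Q phi f, folded N_def H_def]
  have "card (carrier (D n)) = card (carrier (semidirect_product K Q \<phi>))" by (rule iso_same_card[OF iso])
  then have "2 * n = card (carrier K) * card (carrier Q)" using D_order[of n] by (simp add: order_def card_cartesian_product)
  then have card: "card N * card H = 2 * n" using dc(4,5) by simp
  have N1: "card N > 1" using dc(4) oK by (simp add: order_def)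
  have H1: "card H > 1" using dc(5) oQ by (simp add: order_def)
  have NH: "N \<inter> H = {(0, False)}" using dc(3) by simp
  show "(\<exists>m::nat. m dvd n \<and> coprime m (n div m) \<and>
            K \<cong> integer_mod_group m \<and> Q \<cong> dihedral_group (n div m))
        \<or> (2 dvd n \<and> K \<cong> dihedral_group (n div 2) \<and> Q \<cong> integer_mod_group 2)"
  proof (cases "N \<subseteq> Rot n")
    case True
    then obtain m where m: "m dvd n" "coprime m (n div m)" "D n\<lparr>carrier := N\<rparr> \<cong> integer_mod_group m"
        "D n\<lparr>carrier := H\<rparr> \<cong> D (n div m)"
      using caseA[OF n dc(1) dc(2) NH card N1] by blast
    have "K \<cong> integer_mod_group m" using iso_trans[OF dc(6) m(3)] .
    moreover have "Q \<cong> D (n div m)" using iso_trans[OF dc(7) m(4)] .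
    ultimately show ?thesis using m(1,2) by blast
  next
    case False
    then have r: "2 dvd n" "D n\<lparr>carrier := N\<rparr> \<cong> D (n div 2)" "D n\<lparr>carrier := H\<rparr> \<cong> integer_mod_group 2"
      using caseB[OF n dc(1) dc(2) NH card H1] by auto
    have "K \<cong> D (n div 2)" using iso_trans[OF dc(6) r(2)] .
    moreover have "Q \<cong> integer_mod_group 2" using iso_trans[OF dc(7) r(3)] .
    ultimately show ?thesis using r(1) by blast
  qed
qed


theorem mainTheorem4:
  fixes n :: nat
  assumes "n > 0"
  shows
    \<comment> \<open>(1)\<close>
    "(\<forall>m::nat. m > 0 \<and> m dvd n \<and> coprime m (n div m) \<longrightarrow>
        (\<exists>\<phi>. \<phi> \<in> hom (dihedral_group (n div m)) (AutoGroup (integer_mod_group m)) \<and>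
              \<phi> (dih_a (n div m)) (1 mod int m) = 1 mod int m \<and>
              \<phi> (dih_x (n div m)) (1 mod int m) = (-1) mod int m) \<and>
        (\<forall>\<phi>. \<phi> \<in> hom (dihedral_group (n div m)) (AutoGroup (integer_mod_group m)) \<and>
              \<phi> (dih_a (n div m)) (1 mod int m) = 1 mod int m \<and>
              \<phi> (dih_x (n div m)) (1 mod int m) = (-1) mod int m \<longrightarrow>
              dihedral_group n \<cong> semidirect_product (integer_mod_group m) (dihedral_group (n div m)) \<phi>))
   \<and> \<comment> \<open>(2)\<close>
    (even n \<longrightarrow>
        (\<exists>\<psi>. \<psi> \<in> hom (integer_mod_group 2) (AutoGroup (dihedral_group (n div 2))) \<and>
              \<psi> 1 (dih_a (n div 2)) = inv\<^bsub>dihedral_group (n div 2)\<^esub> (dih_a (n div 2)) \<and>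
              \<psi> 1 (dih_x (n div 2)) = dih_a (n div 2) \<otimes>\<^bsub>dihedral_group (n div 2)\<^esub> dih_x (n div 2)) \<and>
        (\<forall>\<psi>. \<psi> \<in> hom (integer_mod_group 2) (AutoGroup (dihedral_group (n div 2))) \<and>
              \<psi> 1 (dih_a (n div 2)) = inv\<^bsub>dihedral_group (n div 2)\<^esub> (dih_a (n div 2)) \<and>
              \<psi> 1 (dih_x (n div 2)) = dih_a (n div 2) \<otimes>\<^bsub>dihedral_group (n div 2)\<^esub> dih_x (n div 2) \<longrightarrow>
              dihedral_group n \<cong> semidirect_product (dihedral_group (n div 2)) (integer_mod_group 2) \<psi>))
   \<and> \<comment> \<open>(3)\<close>
    (2 dvd n \<and> \<not> 4 dvd n \<longrightarrow>
        dihedral_group n \<cong> DirProd (dihedral_group (n div 2)) (integer_mod_group 2))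
   \<and> \<comment> \<open>(4)\<close>
    (\<forall>K :: 'a monoid. \<forall>Q :: 'b monoid. \<forall>\<phi>.
        group K \<and> group Q \<and> \<phi> \<in> hom Q (AutoGroup K) \<and>
        order K > 1 \<and> order Q > 1 \<and>
        dihedral_group n \<cong> semidirect_product K Q \<phi> \<longrightarrow>
        (\<exists>m::nat. m dvd n \<and> coprime m (n div m) \<and>
            K \<cong> integer_mod_group m \<and> Q \<cong> dihedral_group (n div m))
        \<or> (2 dvd n \<and> K \<cong> dihedral_group (n div 2) \<and> Q \<cong> integer_mod_group 2))"
    apply (intro conjI)
  subgoal using part1[OF assms] by blast
  subgoal using part2[OF assms] by blast
  subgoal using part3[OF assms] by blast
  subgoal using part4[OF assms] by blast
  done

end
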